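(* The monoid $\mathrm{lps}$ and the monoids $\mathrm{lps}_n$ for $n\geq2$ do not satisfy any non-trivial identity.
   Context: Let $\mathcal{A}=\{1<2<3<\cdots\}$ and $\mathcal{A}_n=\{1<2<\cdots<n\}$. An lPS tableau is a finite (possibly empty) sequence of nonempty bottom-justified columns of boxes filled with positive integers, such that the entries of each column are strictly decreasing from top to bottom and the bottom entries of the columns form a weakly increasing sequence from left to right. Right insertion of a symbol $a$ into an lPS tableau $B$: if $a$ is greater than or equal to every entry of the bottom row, append a new column consisting of $a$ at the right end; otherwise, let $z$ be the leftmost bottom-row entry with $z>a$ and put $a$ in a new box at the bottom of the column of $z$ (the previous entries of that column move up one box). For $w=w_1\cdots w_k$, $\mathfrak{R}_\ell(w)$ is obtained by starting with the empty tableau and right-inserting $w_1,\dots,w_k$ in order. The monoid $\mathrm{lps}$ (resp. $\mathrm{lps}_n$) is the quotient of $\mathcal{A}^*$ (resp. $\mathcal{A}_n^*$) by the congruence $u\equiv v\iff\mathfrak{R}_\ell(u)=\mathfrak{R}_\ell(v)$. An identity is a formal equality $u=v$ of words over a countable alphabet $\Sigma$ of variables; it is non-trivial if $u\neq v$ as words; a monoid $M$ satisfies it if $f(u)=f(v)$ for every monoid morphism $f:\Sigma^*\to M$. *)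

theory Defs
  imports Main
begin

text \<open>An lPS tableau is a list of columns (left to right); each column is a list of
  entries read from the bottom box upwards (so the head is the bottom-row entry).\<close>
type_synonym tableau = "nat list list"

fun rins :: "tableau \<Rightarrow> nat \<Rightarrow> tableau" where
  "rins [] a = [[a]]"
| "rins (c # cs) a = (if a < hd c then (a # c) # cs else c # rins cs a)"

definition Rl :: "nat list \<Rightarrow> tableau" where
  "Rl w = foldl rins [] w"

text \<open>The monoid lps over alphabet A (A = {1..} for lps, A = {1..n} for lps_n):
  quotient of the free monoid A^* by the congruence u ~ v iff Rl u = Rl v.
  Elements are congruence classes.\<close>
definition lps_cls :: "nat set \<Rightarrow> nat list \<Rightarrow> nat list set" where
  "lps_cls A w = {v \<in> lists A. Rl v = Rl w}"

definition lps_carrier :: "nat set \<Rightarrow> nat list set set" where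
  "lps_carrier A = lps_cls A ` lists A"

definition lps_mult :: "nat set \<Rightarrow> nat list set \<Rightarrow> nat list set \<Rightarrow> nat list set" where
  "lps_mult A X Y = \<Union>{lps_cls A (x @ y) | x y. x \<in> X \<and> y \<in> Y}"

definition lps_one :: "nat set \<Rightarrow> nat list set" where
  "lps_one A = lps_cls A []"

text \<open>Monoid morphisms from the free monoid Sigma^* (Sigma = nat, a countable set of
  variables) into the monoid lps over A.\<close>
definition lps_morphism :: "nat set \<Rightarrow> (nat list \<Rightarrow> nat list set) \<Rightarrow> bool" where
  "lps_morphism A f \<longleftrightarrow> (\<forall>w. f w \<in> lps_carrier A) \<and> f [] = lps_one A \<and>
     (\<forall>x y. f (x @ y) = lps_mult A (f x) (f y))"

definition lps_satisfies :: "nat set \<Rightarrow> nat list \<Rightarrow> nat list \<Rightarrow> bool" where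
  "lps_satisfies A u v \<longleftrightarrow> (\<forall>f. lps_morphism A f \<longrightarrow> f u = f v)"

end

theory Submission
  imports Defs
begin

lemma rins_app: "(\<forall>c\<in>set T. hd c = (1::nat)) \<Longrightarrow> 1 \<le> a \<Longrightarrow> rins (T @ S) a = T @ rins S a"
  by (induction T) auto

lemma foldl_app: "(\<forall>c\<in>set T. hd c = (1::nat)) \<Longrightarrow> (\<forall>a\<in>set y. 1 \<le> a) \<Longrightarrow>
   foldl rins (T @ S) y = T @ foldl rins S y"
  by (induction y arbitrary: S) (auto simp: rins_app)

lemma Rl_append: "(\<forall>c\<in>set (Rl p). hd c = (1::nat)) \<Longrightarrow> (\<forall>a\<in>set q. 1 \<le> a) \<Longrightarrow>
   Rl (p @ q) = Rl p @ Rl q"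
  unfolding Rl_def using foldl_app[of "foldl rins [] p" q "[]"] by simp

definition phi :: "nat \<Rightarrow> nat list" where
  "phi i = concat (replicate i [2,1]) @ [1]"

definition g :: "nat \<Rightarrow> nat list list" where
  "g i = replicate i [1,2] @ [[1]]"

definition Phi :: "nat list \<Rightarrow> nat list" where
  "Phi w = concat (map phi w)"

lemma concat_rep: "concat (replicate (Suc i) xs) = concat (replicate i xs) @ xs"
  by (induction i) auto

lemma Rl_21: "Rl [2,1] = [[1,2]]" by (simp add: Rl_def)

lemma Rl_rep: "Rl (concat (replicate i [2,1])) = replicate i [1,2]"
proof (induction i)
  case 0 then show ?case by (simp add: Rl_def)
next
  case (Suc i)
  have "Rl (concat (replicate (Suc i) [2,1])) = Rl (concat (replicate i [2,1]) @ [2,1])"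
    by (simp only: concat_rep)
  also have "\<dots> = Rl (concat (replicate i [2,1])) @ Rl [2,1]"
    using Suc.IH by (intro Rl_append) auto
  also have "\<dots> = replicate (Suc i) [1,2]"
    by (simp only: Suc.IH Rl_21 replicate_append_same replicate_Suc)
  finally show ?case .
qed

lemma Rl_phi: "Rl (phi i) = g i"
  unfolding phi_def g_def
  using Rl_append[of "concat (replicate i [2,1])" "[1]"] Rl_rep[of i] by (auto simp: Rl_def)

lemma Phi_set: "set (Phi w) \<subseteq> {1,2}"
  by (auto simp: Phi_def phi_def)

lemma Rl_Phi: "Rl (Phi w) = concat (map g w)"
proof (induction w)
  case Nil then show ?case by (simp add: Rl_def Phi_def)
next
  case (Cons i w)
  have "Rl (Phi (i # w)) = Rl (phi i @ Phi w)" by (simp add: Phi_def)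
  also have "\<dots> = Rl (phi i) @ Rl (Phi w)"
    using Rl_phi[of i] Phi_set[of w] by (intro Rl_append) (auto simp: g_def)
  finally show ?case by (simp add: Cons Rl_phi)
qed

lemma heads_Phi: "\<forall>c\<in>set (Rl (Phi w)). hd c = 1"
  by (auto simp: Rl_Phi g_def)

lemma g_prefix: "g i @ xs = g j @ ys \<Longrightarrow> i = j \<and> xs = ys"
proof (induction i arbitrary: j)
  case 0 then show ?case by (cases j) (auto simp: g_def)
next
  case (Suc i) then show ?case by (cases j) (auto simp: g_def)
qed

lemma concat_g_inj: "concat (map g u) = concat (map g v) \<Longrightarrow> u = v"
proof (induction u arbitrary: v)
  case Nil then show ?case by (cases v) (auto simp: g_def)
next
  case (Cons i u)
  show ?case
  proof (cases v)
    case Nil then show ?thesis using Cons.prems by (simp add: g_def)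
  next
    case (Cons j v')
    then have "g i @ concat (map g u) = g j @ concat (map g v')" using Cons.prems by simp
    then show ?thesis using g_prefix Cons.IH Cons by blast
  qed
qed


lemma main:
  assumes A1: "A \<subseteq> {1..}" and A2: "{1,2} \<subseteq> A" and uv: "u \<noteq> v"
  shows "\<not> lps_satisfies A u v"
proof -
  define f where "f w = lps_cls A (Phi w)" for w
  have inA: "Phi w \<in> lists A" for w using Phi_set[of w] A2 by auto
  have ge1: "\<forall>a\<in>set y. 1 \<le> a" if "y \<in> lists A" for y using that A1 by auto
  have mult: "f (x @ y) = lps_mult A (f x) (f y)" for x y
  proof -
    let ?p = "Phi x" and ?q = "Phi y"
    have pq: "Phi (x @ y) = ?p @ ?q" by (simp add: Phi_def)
    have eq: "lps_cls A (x' @ y') = lps_cls A (?p @ ?q)"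
      if "x' \<in> lps_cls A ?p" "y' \<in> lps_cls A ?q" for x' y'
    proof -
      have x': "x' \<in> lists A" "Rl x' = Rl ?p" and y': "y' \<in> lists A" "Rl y' = Rl ?q"
        using that by (auto simp: lps_cls_def)
      have "Rl (x' @ y') = Rl ?p @ Rl y'"
        using Rl_append[of x' y'] x' ge1[OF y'(1)] heads_Phi[of x] by simp
      also have "\<dots> = Rl (?p @ ?q)"
        using Rl_append[of ?p ?q] heads_Phi[of x] ge1[OF inA[of y]] y'(2) by simp
      finally show ?thesis by (simp add: lps_cls_def)
    qed
    have mem: "?p \<in> lps_cls A ?p" "?q \<in> lps_cls A ?q" using inA by (auto simp: lps_cls_def)
    have "lps_mult A (f x) (f y) = lps_cls A (?p @ ?q)"
      unfolding lps_mult_def f_def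
    proof (rule antisym)
      show "\<Union> {lps_cls A (x' @ y') |x' y'. x' \<in> lps_cls A ?p \<and> y' \<in> lps_cls A ?q}
             \<subseteq> lps_cls A (?p @ ?q)" using eq by blast
      show "lps_cls A (?p @ ?q) \<subseteq> \<Union> {lps_cls A (x' @ y') |x' y'. x' \<in> lps_cls A ?p \<and> y' \<in> lps_cls A ?q}"
        using mem by blast
    qed
    then show ?thesis by (simp add: f_def pq)
  qed
  have morph: "lps_morphism A f"
    unfolding lps_morphism_def
    using inA mult by (auto simp: f_def lps_carrier_def lps_one_def Phi_def)
  have "f u \<noteq> f v"
  proof
    assume "f u = f v"
    then have "Phi u \<in> lps_cls A (Phi v)"
      using inA[of u] by (auto simp: f_def lps_cls_def)
    then have "Rl (Phi u) = Rl (Phi v)" by (simp add: lps_cls_def)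
    then show False using uv concat_g_inj by (simp add: Rl_Phi)
  qed
  then show ?thesis using morph by (auto simp: lps_satisfies_def)
qed

theorem corollary4p4:
  shows "(\<forall>u v :: nat list. u \<noteq> v \<longrightarrow> \<not> lps_satisfies {1..} u v) \<and>
         (\<forall>n::nat. n \<ge> 2 \<longrightarrow> (\<forall>u v :: nat list. u \<noteq> v \<longrightarrow> \<not> lps_satisfies {1..n} u v))"
proof (intro conjI allI impI)
  fix u v :: "nat list" assume "u \<noteq> v"
  then show "\<not> lps_satisfies {1..} u v" by (intro main) auto
next
  fix n :: nat and u v :: "nat list" assume "2 \<le> n" "u \<noteq> v"
  then show "\<not> lps_satisfies {1..n} u v" by (intro main) auto
qed

end
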